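(* Let an ILP with data $\mathcal D^p=\mathbf A^f\times\mathbf A^n\times\mathbf B^f\times\mathbf B^n\times\mathbf a\times\mathbf b\times\mathbf c^f\times\mathbf c^n$ be given. A point $x=(x^f,x^n)$ is a weakly optimal solution of the ILP if and only if $x$ is a weakly feasible solution of the ILP and there exists a sign vector $\sigma\in\{-1,1\}^k$ such that the following system (the testing system in orthant $\sigma$) in the unknowns $A'^f,A'^n,a',B'^f,B'^n,b',y^f\in\mathbb R^k,y^n\in\mathbb R^\ell$ is feasible: $$A'^f\in\operatorname{diag}(y^f)\mathbf A^f,\quad A'^n\in\operatorname{diag}(y^f)\mathbf A^n,\quad a'\in\operatorname{diag}(y^f)\mathbf a,$$ $$B'^f\in\operatorname{diag}(y^n)\mathbf B^f,\quad B'^n\in\operatorname{diag}(y^n)\mathbf B^n,\quad b'\in\operatorname{diag}(y^n)\mathbf b,$$ $$A'^fx^f+A'^nx^n=a',\qquad B'^fx^f+B'^nx^n=b',$$ $$(e^TA'^f+e^TB'^f)^T\in\mathbf c^f,$$ $$(e^TA'^n+e^TB'^n)_i\in\mathbf c^n_i\ \text{ for all } i \text{ with } x^n_i>0,\qquad (e^TA'^n+e^TB'^n)_i\le\overline c^n_i\ \text{ for all } i\text{ with } x^n_i=0,$$ $$y^n\ge 0,\qquad \operatorname{diag}(\sigma)y^f\ge 0.$$ (For fixed $x$ and $\sigma$ this is a linear system, since the sign of each component of $y^f$ and $y^n$ is fixed.) Moreover, if so, a scenario witnessing weak optimality of $x$ is $(A^f,A^n,B^f,B^n,a,b,c^f,c^n)$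 with $c^f=(e^TA'^f+e^TB'^f)^T$, where for each $i=1,\dots,k$: if $y^f_i\neq0$ then $(A^f_i,A^n_i,a_i)=\frac1{y^f_i}(A'^f_i,A'^n_i,a'_i)$, otherwise $(A^f_i,A^n_i,a_i)$ is any solution of $A^f_ix^f+A^n_ix^n=a_i$, $A^f_i\in\mathbf A^f_i$, $A^n_i\in\mathbf A^n_i$, $a_i\in\mathbf a_i$; for each $i=1,\dots,\ell$: if $y^n_i>0$ then $(B^f_i,B^n_i,b_i)=\frac1{y^n_i}(B'^f_i,B'^n_i,b'_i)$, otherwise $(B^f_i,B^n_i,b_i)$ is any solution of $B^f_ix^f+B^n_ix^n\ge b_i$, $B^f_i\in\mathbf B^f_i$, $B^n_i\in\mathbf B^n_i$, $b_i\in\mathbf b_i$; and for each $i=1,\dots,n$, $c^n_i=\overline c^n_i$ if $x^n_i=0$ and $c^n_i=(e^TA'^n+e^TB'^n)_i$ otherwise.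
   Context: Interval matrix: for real matrices $\underline A\le\overline A$ (entrywise) of the same size, $\mathbf A=[\underline A,\overline A]=\{A:\underline A\le A\le\overline A\}$; interval vectors are defined analogously, and $\mathbb{IR}^{p\times q}$ denotes the set of $p\times q$ interval matrices. Data of an interval linear program (ILP): interval matrices $\mathbf A^f\in\mathbb{IR}^{k\times m}$, $\mathbf A^n\in\mathbb{IR}^{k\times n}$, $\mathbf B^f\in\mathbb{IR}^{\ell\times m}$, $\mathbf B^n\in\mathbb{IR}^{\ell\times n}$ and interval vectors $\mathbf a\in\mathbb{IR}^k$, $\mathbf b\in\mathbb{IR}^\ell$, $\mathbf c^f\in\mathbb{IR}^m$, $\mathbf c^n\in\mathbb{IR}^n$; $\mathcal D^p$ is the Cartesian product of these sets, and an element $s=(A^f,A^n,B^f,B^n,a,b,c^f,c^n)\in\mathcal D^p$ is a scenario. To a scenario is associated the linear program $LP(s)$: minimize $(c^f)^Tx^f+(c^n)^Tx^n$ over $x^f\in\mathbb R^m$, $x^n\in\mathbb R^n$ subject to $A^fx^f+A^nx^n=a$, $B^fx^f+B^nx^n\ge b$, $x^n\ge 0$. Thus $k$ is the number of equality constraints and $\ell$ the number of inequality constraints. A point $x=(x^f,x^n)$ is a weakly optimal solution of the ILP if there exists a scenario $s\in\mathcal D^p$ such that $x$ is an optimal solution of $LP(s)$; it is a weakly feasible solution if there exists a scenario $s\in\mathcal D^p$ such that $x$ is a feasible solution of $LP(s)$. Further notation: $e$ is the all-ones vector of suitable dimension; $M_i$ denotes the $i$th row of a (possibly interval) matrix $M$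 and $v_i$ the $i$th entry of a vector; $\overline c^n$ is the upper endpoint vector of $\mathbf c^n=[\underline c^n,\overline c^n]$; for $y\in\mathbb R^p$ and an interval matrix or vector $\mathbf M$ with $p$ rows, $\operatorname{diag}(y)\mathbf M=\{\operatorname{diag}(y)M: M\in\mathbf M\}$, where $\operatorname{diag}(y)$ is the diagonal matrix with diagonal $y$. *)

theory Defs
  imports Complex_Main
begin

text \<open>Matrices and vectors are represented as functions on natural-number indices
(0-based); only entries with indices below the stated dimensions are meaningful.
An interval matrix / vector is a pair (lower endpoint, upper endpoint).\<close>

type_synonym rmat = "nat \<Rightarrow> nat \<Rightarrow> real"
type_synonym rvec = "nat \<Rightarrow> real"
type_synonym imat = "rmat \<times> rmat"
type_synonym ivec = "rvec \<times> rvec"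

definition imat_wf :: "nat \<Rightarrow> nat \<Rightarrow> imat \<Rightarrow> bool" where
  "imat_wf p q M \<longleftrightarrow> (\<forall>i<p. \<forall>j<q. fst M i j \<le> snd M i j)"

definition ivec_wf :: "nat \<Rightarrow> ivec \<Rightarrow> bool" where
  "ivec_wf p v \<longleftrightarrow> (\<forall>i<p. fst v i \<le> snd v i)"

definition in_imat :: "nat \<Rightarrow> nat \<Rightarrow> imat \<Rightarrow> rmat \<Rightarrow> bool" where
  "in_imat p q M A \<longleftrightarrow> (\<forall>i<p. \<forall>j<q. fst M i j \<le> A i j \<and> A i j \<le> snd M i j)"

definition in_ivec :: "nat \<Rightarrow> ivec \<Rightarrow> rvec \<Rightarrow> bool" where
  "in_ivec p v a \<longleftrightarrow> (\<forall>i<p. fst v i \<le> a i \<and> a i \<le> snd v i)"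

definition row_in_imat :: "nat \<Rightarrow> imat \<Rightarrow> nat \<Rightarrow> rmat \<Rightarrow> bool" where
  "row_in_imat q M i A \<longleftrightarrow> (\<forall>j<q. fst M i j \<le> A i j \<and> A i j \<le> snd M i j)"

definition entry_in_ivec :: "ivec \<Rightarrow> nat \<Rightarrow> rvec \<Rightarrow> bool" where
  "entry_in_ivec v i a \<longleftrightarrow> fst v i \<le> a i \<and> a i \<le> snd v i"

definition in_diag_imat :: "nat \<Rightarrow> nat \<Rightarrow> rvec \<Rightarrow> imat \<Rightarrow> rmat \<Rightarrow> bool" where
  "in_diag_imat p q y M A' \<longleftrightarrow>
     (\<exists>A. in_imat p q M A \<and> (\<forall>i<p. \<forall>j<q. A' i j = y i * A i j))"

definition in_diag_ivec :: "nat \<Rightarrow> rvec \<Rightarrow> ivec \<Rightarrow> rvec \<Rightarrow> bool" where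
  "in_diag_ivec p y v a' \<longleftrightarrow> (\<exists>a. in_ivec p v a \<and> (\<forall>i<p. a' i = y i * a i))"

text \<open>ILP data: interval matrices A^f (k x m), A^n (k x n), B^f (l x m), B^n (l x n),
interval vectors a (k), b (l), c^f (m), c^n (n).\<close>
record ilp =
  IAf :: imat
  IAn :: imat
  IBf :: imat
  IBn :: imat
  Ia  :: ivec
  Ib  :: ivec
  Icf :: ivec
  Icn :: ivec

record scenario =
  sAf :: rmat
  sAn :: rmat
  sBf :: rmat
  sBn :: rmat
  sa  :: rvec
  sb  :: rvec
  scf :: rvec
  scn :: rvec

definition ilp_wf :: "nat \<Rightarrow> nat \<Rightarrow> nat \<Rightarrow> nat \<Rightarrow> ilp \<Rightarrow> bool" where
  "ilp_wf k l m n P \<longleftrightarrow>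
     imat_wf k m (IAf P) \<and> imat_wf k n (IAn P) \<and> imat_wf l m (IBf P) \<and> imat_wf l n (IBn P) \<and>
     ivec_wf k (Ia P) \<and> ivec_wf l (Ib P) \<and> ivec_wf m (Icf P) \<and> ivec_wf n (Icn P)"

definition in_Dp :: "nat \<Rightarrow> nat \<Rightarrow> nat \<Rightarrow> nat \<Rightarrow> ilp \<Rightarrow> scenario \<Rightarrow> bool" where
  "in_Dp k l m n P s \<longleftrightarrow>
     in_imat k m (IAf P) (sAf s) \<and> in_imat k n (IAn P) (sAn s) \<and>
     in_imat l m (IBf P) (sBf s) \<and> in_imat l n (IBn P) (sBn s) \<and>
     in_ivec k (Ia P) (sa s) \<and> in_ivec l (Ib P) (sb s) \<and>
     in_ivec m (Icf P) (scf s) \<and> in_ivec n (Icn P) (scn s)"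

definition lp_feasible :: "nat \<Rightarrow> nat \<Rightarrow> nat \<Rightarrow> nat \<Rightarrow> scenario \<Rightarrow> rvec \<Rightarrow> rvec \<Rightarrow> bool" where
  "lp_feasible k l m n s xf xn \<longleftrightarrow>
     (\<forall>i<k. (\<Sum>j<m. sAf s i j * xf j) + (\<Sum>j<n. sAn s i j * xn j) = sa s i) \<and>
     (\<forall>i<l. (\<Sum>j<m. sBf s i j * xf j) + (\<Sum>j<n. sBn s i j * xn j) \<ge> sb s i) \<and>
     (\<forall>j<n. xn j \<ge> 0)"

definition lp_obj :: "nat \<Rightarrow> nat \<Rightarrow> scenario \<Rightarrow> rvec \<Rightarrow> rvec \<Rightarrow> real" where
  "lp_obj m n s xf xn = (\<Sum>j<m. scf s j * xf j) + (\<Sum>j<n. scn s j * xn j)"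

definition lp_optimal :: "nat \<Rightarrow> nat \<Rightarrow> nat \<Rightarrow> nat \<Rightarrow> scenario \<Rightarrow> rvec \<Rightarrow> rvec \<Rightarrow> bool" where
  "lp_optimal k l m n s xf xn \<longleftrightarrow>
     lp_feasible k l m n s xf xn \<and>
     (\<forall>zf zn. lp_feasible k l m n s zf zn \<longrightarrow> lp_obj m n s xf xn \<le> lp_obj m n s zf zn)"

definition weakly_optimal :: "nat \<Rightarrow> nat \<Rightarrow> nat \<Rightarrow> nat \<Rightarrow> ilp \<Rightarrow> rvec \<Rightarrow> rvec \<Rightarrow> bool" where
  "weakly_optimal k l m n P xf xn \<longleftrightarrow> (\<exists>s. in_Dp k l m n P s \<and> lp_optimal k l m n s xf xn)"

definition weakly_feasible :: "nat \<Rightarrow> nat \<Rightarrow> nat \<Rightarrow> nat \<Rightarrow> ilp \<Rightarrow> rvec \<Rightarrow> rvec \<Rightarrow> bool" where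
  "weakly_feasible k l m n P xf xn \<longleftrightarrow> (\<exists>s. in_Dp k l m n P s \<and> lp_feasible k l m n s xf xn)"

definition sign_vector :: "nat \<Rightarrow> rvec \<Rightarrow> bool" where
  "sign_vector k \<sigma> \<longleftrightarrow> (\<forall>i<k. \<sigma> i = -1 \<or> \<sigma> i = 1)"

definition colsum :: "nat \<Rightarrow> rmat \<Rightarrow> nat \<Rightarrow> real" where
  "colsum p M j = (\<Sum>i<p. M i j)"

definition testing_system ::
  "nat \<Rightarrow> nat \<Rightarrow> nat \<Rightarrow> nat \<Rightarrow> ilp \<Rightarrow> rvec \<Rightarrow> rvec \<Rightarrow> rvec \<Rightarrow>
   rmat \<Rightarrow> rmat \<Rightarrow> rvec \<Rightarrow> rmat \<Rightarrow> rmat \<Rightarrow> rvec \<Rightarrow> rvec \<Rightarrow> rvec \<Rightarrow> bool" where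
  "testing_system k l m n P xf xn \<sigma> Af' An' a' Bf' Bn' b' yf yn \<longleftrightarrow>
     in_diag_imat k m yf (IAf P) Af' \<and> in_diag_imat k n yf (IAn P) An' \<and> in_diag_ivec k yf (Ia P) a' \<and>
     in_diag_imat l m yn (IBf P) Bf' \<and> in_diag_imat l n yn (IBn P) Bn' \<and> in_diag_ivec l yn (Ib P) b' \<and>
     (\<forall>i<k. (\<Sum>j<m. Af' i j * xf j) + (\<Sum>j<n. An' i j * xn j) = a' i) \<and>
     (\<forall>i<l. (\<Sum>j<m. Bf' i j * xf j) + (\<Sum>j<n. Bn' i j * xn j) = b' i) \<and>
     (\<forall>j<m. fst (Icf P) j \<le> colsum k Af' j + colsum l Bf' j \<and>
            colsum k Af' j + colsum l Bf' j \<le> snd (Icf P) j) \<and>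
     (\<forall>j<n. xn j > 0 \<longrightarrow> fst (Icn P) j \<le> colsum k An' j + colsum l Bn' j \<and>
            colsum k An' j + colsum l Bn' j \<le> snd (Icn P) j) \<and>
     (\<forall>j<n. xn j = 0 \<longrightarrow> colsum k An' j + colsum l Bn' j \<le> snd (Icn P) j) \<and>
     (\<forall>i<l. yn i \<ge> 0) \<and>
     (\<forall>i<k. \<sigma> i * yf i \<ge> 0)"

definition constructed_scenario ::
  "nat \<Rightarrow> nat \<Rightarrow> nat \<Rightarrow> nat \<Rightarrow> ilp \<Rightarrow> rvec \<Rightarrow> rvec \<Rightarrow>
   rmat \<Rightarrow> rmat \<Rightarrow> rvec \<Rightarrow> rmat \<Rightarrow> rmat \<Rightarrow> rvec \<Rightarrow> rvec \<Rightarrow> rvec \<Rightarrow> scenario \<Rightarrow> bool" where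
  "constructed_scenario k l m n P xf xn Af' An' a' Bf' Bn' b' yf yn s \<longleftrightarrow>
     (\<forall>j<m. scf s j = colsum k Af' j + colsum l Bf' j) \<and>
     (\<forall>i<k. if yf i \<noteq> 0 then
              (\<forall>j<m. sAf s i j = Af' i j / yf i) \<and> (\<forall>j<n. sAn s i j = An' i j / yf i) \<and>
              sa s i = a' i / yf i
            else
              (\<Sum>j<m. sAf s i j * xf j) + (\<Sum>j<n. sAn s i j * xn j) = sa s i \<and>
              row_in_imat m (IAf P) i (sAf s) \<and> row_in_imat n (IAn P) i (sAn s) \<and>
              entry_in_ivec (Ia P) i (sa s)) \<and>
     (\<forall>i<l. if yn i > 0 then
              (\<forall>j<m. sBf s i j = Bf' i j / yn i) \<and> (\<forall>j<n. sBn s i j = Bn' i j / yn i) \<and>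
              sb s i = b' i / yn i
            else
              (\<Sum>j<m. sBf s i j * xf j) + (\<Sum>j<n. sBn s i j * xn j) \<ge> sb s i \<and>
              row_in_imat m (IBf P) i (sBf s) \<and> row_in_imat n (IBn P) i (sBn s) \<and>
              entry_in_ivec (Ib P) i (sb s)) \<and>
     (\<forall>j<n. scn s j = (if xn j = 0 then snd (Icn P) j else colsum k An' j + colsum l Bn' j))"

end

theory Submission
  imports Defs
begin


definition dp :: "nat \<Rightarrow> (nat \<Rightarrow> real) \<Rightarrow> (nat \<Rightarrow> real) \<Rightarrow> real" where
  "dp N u v = (\<Sum>j<N. u j * v j)"

lemma dp_lin2: "dp N u (\<lambda>j. a * v j + b * w j) = a * dp N u v + b * dp N u w"
  by (simp add: dp_def algebra_simps sum.distrib sum_distrib_left)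

lemma dp_lin1: "dp N (\<lambda>j. a * v j + b * w j) u = a * dp N v u + b * dp N w u"
  by (simp add: dp_def algebra_simps sum.distrib sum_distrib_left)

lemma farkas_aux:
  fixes G :: "'i \<Rightarrow> nat \<Rightarrow> real"
  assumes "finite I"
  shows "\<not> (\<exists>w. (\<forall>i\<in>I. 0 \<le> w i) \<and> (\<forall>j<N. c j = (\<Sum>i\<in>I. w i * G i j)))
     \<Longrightarrow> \<exists>d. (\<forall>i\<in>I. 0 \<le> dp N (G i) d) \<and> dp N c d < 0"
  using assms
proof (induction I arbitrary: G c rule: finite_induct)
  case empty
  then obtain j where j: "j < N" "c j \<noteq> 0" by auto
  have "0 < (\<Sum>j<N. c j * c j)"
    by (rule sum_pos2[of _ j]) (use j in \<open>auto simp: zero_less_mult_iff linorder_neq_iff\<close>)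
  then show ?case by (intro exI[of _ "\<lambda>j. - c j"]) (simp add: dp_def sum_negf)
next
  case (insert q I)
  have noI: "\<not> (\<exists>w. (\<forall>i\<in>I. 0 \<le> w i) \<and> (\<forall>j<N. c j = (\<Sum>i\<in>I. w i * G i j)))"
  proof
    assume "\<exists>w. (\<forall>i\<in>I. 0 \<le> w i) \<and> (\<forall>j<N. c j = (\<Sum>i\<in>I. w i * G i j))"
    then obtain w where l: "\<forall>i\<in>I. 0 \<le> w i" "\<forall>j<N. c j = (\<Sum>i\<in>I. w i * G i j)" by blast
    have "(\<forall>i\<in>insert q I. 0 \<le> (w(q:=0)) i) \<and> (\<forall>j<N. c j = (\<Sum>i\<in>insert q I. (w(q:=0)) i * G i j))"
      using l insert.hyps by (auto intro!: sum.cong)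
    with insert.prems show False by blast
  qed
  from insert.IH[OF noI] obtain d where d: "\<forall>i\<in>I. 0 \<le> dp N (G i) d" "dp N c d < 0" by blast
  show ?case
  proof (cases "0 \<le> dp N (G q) d")
    case True with d show ?thesis by (intro exI[of _ d]) auto
  next
    case False
    define t where "t = dp N (G q) d"
    have t: "t < 0" using False t_def by simp
    define G' where "G' = (\<lambda>i j. dp N (G i) d * G q j + (- t) * G i j)"
    define c' where "c' = (\<lambda>j. dp N c d * G q j + (- t) * c j)"
    have no': "\<not> (\<exists>\<mu>. (\<forall>i\<in>I. 0 \<le> \<mu> i) \<and> (\<forall>j<N. c' j = (\<Sum>i\<in>I. \<mu> i * G' i j)))"
    proof
      assume "\<exists>\<mu>. (\<forall>i\<in>I. 0 \<le> \<mu> i) \<and> (\<forall>j<N. c' j = (\<Sum>i\<in>I. \<mu> i * G' i j))"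
      then obtain \<mu> where mu: "\<forall>i\<in>I. 0 \<le> \<mu> i" "\<forall>j<N. c' j = (\<Sum>i\<in>I. \<mu> i * G' i j)" by blast
      define lq where "lq = ((\<Sum>i\<in>I. \<mu> i * dp N (G i) d) - dp N c d) / (- t)"
      have lq0: "0 \<le> lq"
      proof -
        have "0 \<le> (\<Sum>i\<in>I. \<mu> i * dp N (G i) d)" using mu d by (intro sum_nonneg) auto
        then show ?thesis using t d unfolding lq_def by (intro divide_nonneg_pos) auto
      qed
      define w where "w = \<mu>(q := lq)"
      have "\<forall>j<N. c j = (\<Sum>i\<in>insert q I. w i * G i j)"
      proof (intro allI impI)
        fix j assume j: "j < N"
        have "(\<Sum>i\<in>insert q I. w i * G i j) = lq * G q j + (\<Sum>i\<in>I. \<mu> i * G i j)"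
          using insert.hyps unfolding w_def by (auto intro!: sum.cong)
        moreover have "c' j = (\<Sum>i\<in>I. \<mu> i * dp N (G i) d) * G q j + (- t) * (\<Sum>i\<in>I. \<mu> i * G i j)"
          using mu(2) j unfolding G'_def
          by (simp add: algebra_simps sum.distrib sum_distrib_left sum_distrib_right sum_subtractf sum_negf)
        ultimately show "c j = (\<Sum>i\<in>insert q I. w i * G i j)"
          using t unfolding c'_def lq_def by (simp add: field_simps)
      qed
      moreover have "\<forall>i\<in>insert q I. 0 \<le> w i" using mu lq0 unfolding w_def by auto
      ultimately show False using insert.prems by blast
    qed
    from insert.IH[OF no'] obtain d' where d': "\<forall>i\<in>I. 0 \<le> dp N (G' i) d'" "dp N c' d' < 0" by blast
    define d'' where "d'' = (\<lambda>j. 1 * d' j + (- dp N (G q) d' / t) * d j)"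
    have key: "dp N u d'' = (dp N u d * dp N (G q) d' + (- t) * dp N u d') / (- t)" for u
      unfolding d''_def dp_lin2 using t by (simp add: field_simps)
    have "0 \<le> dp N (G i) d''" if "i \<in> I" for i
    proof -
      have "0 \<le> dp N (G' i) d'" using d' that by auto
      then have "0 \<le> dp N (G i) d * dp N (G q) d' + (- t) * dp N (G i) d'"
        unfolding G'_def dp_lin1 by simp
      then show ?thesis unfolding key using t by (intro divide_nonneg_pos) auto
    qed
    moreover have "dp N (G q) d'' = 0" unfolding key t_def by (simp add: algebra_simps)
    moreover have "dp N c d'' < 0"
    proof -
      have "dp N c d * dp N (G q) d' + (- t) * dp N c d' < 0"
        using d' unfolding c'_def dp_lin1 by simp
      then show ?thesis unfolding key using t by (intro divide_neg_pos) auto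
    qed
    ultimately show ?thesis by (intro exI[of _ d'']) auto
  qed
qed



definition rowA where "rowA m n s i zf zn = (\<Sum>j<m. sAf s i j * zf j) + (\<Sum>j<n. sAn s i j * zn j)"
definition rowB where "rowB m n s i zf zn = (\<Sum>j<m. sBf s i j * zf j) + (\<Sum>j<n. sBn s i j * zn j)"
definition slf where "slf k l s yf yn j = scf s j - (\<Sum>i<k. yf i * sAf s i j) - (\<Sum>i<l. yn i * sBf s i j)"
definition sln where "sln k l s yf yn j = scn s j - (\<Sum>i<k. yf i * sAn s i j) - (\<Sum>i<l. yn i * sBn s i j)"

lemma obj_decomp:
  "lp_obj m n s zf zn = (\<Sum>i<k. yf i * rowA m n s i zf zn) + (\<Sum>i<l. yn i * rowB m n s i zf zn)
     + (\<Sum>j<m. slf k l s yf yn j * zf j) + (\<Sum>j<n. sln k l s yf yn j * zn j)"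
proof -
  have 1: "(\<Sum>i<k. yf i * rowA m n s i zf zn) = (\<Sum>j<m. (\<Sum>i<k. yf i * sAf s i j) * zf j) + (\<Sum>j<n. (\<Sum>i<k. yf i * sAn s i j) * zn j)"
    unfolding rowA_def by (simp add: sum_distrib_left sum_distrib_right sum.distrib mult.assoc distrib_left sum.swap[of _ "{..<k}"])
  have 2: "(\<Sum>i<l. yn i * rowB m n s i zf zn) = (\<Sum>j<m. (\<Sum>i<l. yn i * sBf s i j) * zf j) + (\<Sum>j<n. (\<Sum>i<l. yn i * sBn s i j) * zn j)"
    unfolding rowB_def by (simp add: sum_distrib_left sum_distrib_right sum.distrib mult.assoc distrib_left sum.swap[of _ "{..<l}"])
  show ?thesis unfolding 1 2 lp_obj_def slf_def sln_def
    by (simp add: algebra_simps sum.distrib sum_subtractf)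
qed

lemma weak_dual:
  assumes "\<forall>j<m. slf k l s yf yn j = 0" "\<forall>j<n. sln k l s yf yn j \<ge> 0" "\<forall>i<l. yn i \<ge> 0"
    "lp_feasible k l m n s zf zn"
  shows "lp_obj m n s zf zn \<ge> (\<Sum>i<k. yf i * sa s i) + (\<Sum>i<l. yn i * sb s i)"
proof -
  have a: "(\<Sum>i<k. yf i * rowA m n s i zf zn) = (\<Sum>i<k. yf i * sa s i)"
    using assms(4) unfolding lp_feasible_def rowA_def by auto
  have b: "(\<Sum>i<l. yn i * rowB m n s i zf zn) \<ge> (\<Sum>i<l. yn i * sb s i)"
    using assms(3,4) unfolding lp_feasible_def rowB_def by (intro sum_mono mult_left_mono) auto
  have c: "(\<Sum>j<n. sln k l s yf yn j * zn j) \<ge> 0"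
    using assms(2,4) unfolding lp_feasible_def by (intro sum_nonneg) auto
  have d: "(\<Sum>j<m. slf k l s yf yn j * zf j) = 0" using assms(1) by auto
  show ?thesis unfolding obj_decomp[where k=k and yf=yf and l=l and yn=yn] using a b c d by linarith
qed

lemma dual_eq:
  assumes "\<forall>j<m. slf k l s yf yn j = 0" "\<forall>j<n. sln k l s yf yn j * zn j = 0"
    "\<forall>i<l. yn i * rowB m n s i zf zn = yn i * sb s i"
    "lp_feasible k l m n s zf zn"
  shows "lp_obj m n s zf zn = (\<Sum>i<k. yf i * sa s i) + (\<Sum>i<l. yn i * sb s i)"
proof -
  have a: "(\<Sum>i<k. yf i * rowA m n s i zf zn) = (\<Sum>i<k. yf i * sa s i)"
    using assms(4) unfolding lp_feasible_def rowA_def by auto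
  have b: "(\<Sum>i<l. yn i * rowB m n s i zf zn) = (\<Sum>i<l. yn i * sb s i)"
    using assms(3) by (intro sum.cong) auto
  have c: "(\<Sum>j<n. sln k l s yf yn j * zn j) = 0" using assms(2) by (intro sum.neutral) auto
  have d: "(\<Sum>j<m. slf k l s yf yn j * zf j) = 0" using assms(1) by auto
  show ?thesis unfolding obj_decomp[where k=k and yf=yf and l=l and yn=yn] using a b c d by simp
qed



lemma backward:
  assumes wf: "ilp_wf k l m n P" and wfe: "weakly_feasible k l m n P xf xn"
    and ts: "testing_system k l m n P xf xn \<sigma> Af' An' a' Bf' Bn' b' yf yn"
    and cs: "constructed_scenario k l m n P xf xn Af' An' a' Bf' Bn' b' yf yn s"
  shows "in_Dp k l m n P s \<and> lp_optimal k l m n s xf xn"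
proof -
  have tsp: "in_diag_imat k m yf (IAf P) Af'" "in_diag_imat k n yf (IAn P) An'" "in_diag_ivec k yf (Ia P) a'"
    "in_diag_imat l m yn (IBf P) Bf'" "in_diag_imat l n yn (IBn P) Bn'" "in_diag_ivec l yn (Ib P) b'"
    using ts unfolding testing_system_def by auto
  obtain Af0 where Af0: "in_imat k m (IAf P) Af0" "\<forall>i<k. \<forall>j<m. Af' i j = yf i * Af0 i j"
    using tsp(1) unfolding in_diag_imat_def by blast
  obtain An0 where An0: "in_imat k n (IAn P) An0" "\<forall>i<k. \<forall>j<n. An' i j = yf i * An0 i j"
    using tsp(2) unfolding in_diag_imat_def by blast
  obtain a0 where a0: "in_ivec k (Ia P) a0" "\<forall>i<k. a' i = yf i * a0 i"
    using tsp(3) unfolding in_diag_ivec_def by blast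
  obtain Bf0 where Bf0: "in_imat l m (IBf P) Bf0" "\<forall>i<l. \<forall>j<m. Bf' i j = yn i * Bf0 i j"
    using tsp(4) unfolding in_diag_imat_def by blast
  obtain Bn0 where Bn0: "in_imat l n (IBn P) Bn0" "\<forall>i<l. \<forall>j<n. Bn' i j = yn i * Bn0 i j"
    using tsp(5) unfolding in_diag_imat_def by blast
  obtain b0 where b0: "in_ivec l (Ib P) b0" "\<forall>i<l. b' i = yn i * b0 i"
    using tsp(6) unfolding in_diag_ivec_def by blast
  have eqA: "\<forall>i<k. (\<Sum>j<m. Af' i j * xf j) + (\<Sum>j<n. An' i j * xn j) = a' i"
   and eqB: "\<forall>i<l. (\<Sum>j<m. Bf' i j * xf j) + (\<Sum>j<n. Bn' i j * xn j) = b' i"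
   and cf: "\<forall>j<m. fst (Icf P) j \<le> colsum k Af' j + colsum l Bf' j \<and>
            colsum k Af' j + colsum l Bf' j \<le> snd (Icf P) j"
   and cnp: "\<forall>j<n. xn j > 0 \<longrightarrow> fst (Icn P) j \<le> colsum k An' j + colsum l Bn' j \<and>
            colsum k An' j + colsum l Bn' j \<le> snd (Icn P) j"
   and cn0: "\<forall>j<n. xn j = 0 \<longrightarrow> colsum k An' j + colsum l Bn' j \<le> snd (Icn P) j"
   and yn0: "\<forall>i<l. yn i \<ge> 0"
    using ts unfolding testing_system_def by auto
  from wfe obtain s0 where s0: "in_Dp k l m n P s0" "lp_feasible k l m n s0 xf xn"
    unfolding weakly_feasible_def by blast
  have xn0: "\<forall>j<n. xn j \<ge> 0" using s0(2) unfolding lp_feasible_def by auto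
  have cs_f: "\<forall>j<m. scf s j = colsum k Af' j + colsum l Bf' j"
   and cs_A: "\<forall>i<k. if yf i \<noteq> 0 then
              (\<forall>j<m. sAf s i j = Af' i j / yf i) \<and> (\<forall>j<n. sAn s i j = An' i j / yf i) \<and>
              sa s i = a' i / yf i
            else
              (\<Sum>j<m. sAf s i j * xf j) + (\<Sum>j<n. sAn s i j * xn j) = sa s i \<and>
              row_in_imat m (IAf P) i (sAf s) \<and> row_in_imat n (IAn P) i (sAn s) \<and>
              entry_in_ivec (Ia P) i (sa s)"
   and cs_B: "\<forall>i<l. if yn i > 0 then
              (\<forall>j<m. sBf s i j = Bf' i j / yn i) \<and> (\<forall>j<n. sBn s i j = Bn' i j / yn i) \<and>
              sb s i = b' i / yn i
            else
              (\<Sum>j<m. sBf s i j * xf j) + (\<Sum>j<n. sBn s i j * xn j) \<ge> sb s i \<and>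
              row_in_imat m (IBf P) i (sBf s) \<and> row_in_imat n (IBn P) i (sBn s) \<and>
              entry_in_ivec (Ib P) i (sb s)"
   and cs_n: "\<forall>j<n. scn s j = (if xn j = 0 then snd (Icn P) j else colsum k An' j + colsum l Bn' j)"
    using cs unfolding constructed_scenario_def by auto
  have hAf: "Af' i j = yf i * sAf s i j" if "i < k" "j < m" for i j
    using cs_A Af0 that by (cases "yf i = 0") auto
  have hAn: "An' i j = yf i * sAn s i j" if "i < k" "j < n" for i j
    using cs_A An0 that by (cases "yf i = 0") auto
  have ha: "a' i = yf i * sa s i" if "i < k" for i
    using cs_A a0 that by (cases "yf i = 0") auto
  have hBf: "Bf' i j = yn i * sBf s i j" if "i < l" "j < m" for i j
    using cs_B Bf0 yn0 that by (cases "yn i > 0") auto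
  have hBn: "Bn' i j = yn i * sBn s i j" if "i < l" "j < n" for i j
    using cs_B Bn0 yn0 that by (cases "yn i > 0") auto
  have hb: "b' i = yn i * sb s i" if "i < l" for i
    using cs_B b0 yn0 that by (cases "yn i > 0") auto
  have rA: "yf i * rowA m n s i xf xn = yf i * sa s i" if "i < k" for i
  proof -
    have "yf i * rowA m n s i xf xn = (\<Sum>j<m. Af' i j * xf j) + (\<Sum>j<n. An' i j * xn j)"
      unfolding rowA_def using that by (simp add: distrib_left sum_distrib_left hAf hAn mult.assoc)
    also have "\<dots> = yf i * sa s i" using eqA ha that by auto
    finally show ?thesis .
  qed
  have rB: "yn i * rowB m n s i xf xn = yn i * sb s i" if "i < l" for i
  proof -
    have "yn i * rowB m n s i xf xn = (\<Sum>j<m. Bf' i j * xf j) + (\<Sum>j<n. Bn' i j * xn j)"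
      unfolding rowB_def using that by (simp add: distrib_left sum_distrib_left hBf hBn mult.assoc)
    also have "\<dots> = yn i * sb s i" using eqB hb that by auto
    finally show ?thesis .
  qed
  have colAf: "colsum k Af' j = (\<Sum>i<k. yf i * sAf s i j)" if "j < m" for j
    unfolding colsum_def using that hAf by (intro sum.cong) auto
  have colBf: "colsum l Bf' j = (\<Sum>i<l. yn i * sBf s i j)" if "j < m" for j
    unfolding colsum_def using that hBf by (intro sum.cong) auto
  have colAn: "colsum k An' j = (\<Sum>i<k. yf i * sAn s i j)" if "j < n" for j
    unfolding colsum_def using that hAn by (intro sum.cong) auto
  have colBn: "colsum l Bn' j = (\<Sum>i<l. yn i * sBn s i j)" if "j < n" for j
    unfolding colsum_def using that hBn by (intro sum.cong) auto
  have slf0: "\<forall>j<m. slf k l s yf yn j = 0"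
    unfolding slf_def using cs_f colAf colBf by auto
  have sln0: "\<forall>j<n. sln k l s yf yn j \<ge> 0"
    unfolding sln_def using cs_n cn0 colAn colBn by auto
  have sln1: "\<forall>j<n. sln k l s yf yn j * xn j = 0"
    unfolding sln_def using cs_n colAn colBn by auto
  have feas: "lp_feasible k l m n s xf xn"
    unfolding lp_feasible_def
  proof (intro conjI allI impI)
    fix i assume i: "i < k"
    show "(\<Sum>j<m. sAf s i j * xf j) + (\<Sum>j<n. sAn s i j * xn j) = sa s i"
    proof (cases "yf i = 0")
      case True then show ?thesis using cs_A i by auto
    next
      case False then show ?thesis using rA[OF i] unfolding rowA_def by simp
    qed
  next
    fix i assume i: "i < l"
    show "(\<Sum>j<m. sBf s i j * xf j) + (\<Sum>j<n. sBn s i j * xn j) \<ge> sb s i"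
    proof (cases "yn i > 0")
      case False then show ?thesis using cs_B i by auto
    next
      case True then show ?thesis using rB[OF i] unfolding rowB_def by simp
    qed
  next
    fix j assume "j < n" then show "0 \<le> xn j" using xn0 by auto
  qed
  have opt: "lp_optimal k l m n s xf xn"
    unfolding lp_optimal_def
  proof (intro conjI allI impI feas)
    fix zf zn assume z: "lp_feasible k l m n s zf zn"
    have "lp_obj m n s xf xn = (\<Sum>i<k. yf i * sa s i) + (\<Sum>i<l. yn i * sb s i)"
      using dual_eq[OF slf0 sln1 _ feas] rB by auto
    also have "\<dots> \<le> lp_obj m n s zf zn" using weak_dual[OF slf0 sln0 yn0 z] .
    finally show "lp_obj m n s xf xn \<le> lp_obj m n s zf zn" .
  qed
  have inD: "in_Dp k l m n P s"
    unfolding in_Dp_def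
  proof (intro conjI)
    show "in_imat k m (IAf P) (sAf s)" unfolding in_imat_def
    proof (intro allI impI)
      fix i j assume "i < k" "j < m"
      then show "fst (IAf P) i j \<le> sAf s i j \<and> sAf s i j \<le> snd (IAf P) i j"
        using cs_A Af0 unfolding in_imat_def row_in_imat_def by (cases "yf i = 0") auto
    qed
    show "in_imat k n (IAn P) (sAn s)" unfolding in_imat_def
    proof (intro allI impI)
      fix i j assume "i < k" "j < n"
      then show "fst (IAn P) i j \<le> sAn s i j \<and> sAn s i j \<le> snd (IAn P) i j"
        using cs_A An0 unfolding in_imat_def row_in_imat_def by (cases "yf i = 0") auto
    qed
    show "in_imat l m (IBf P) (sBf s)" unfolding in_imat_def
    proof (intro allI impI)
      fix i j assume "i < l" "j < m"
      then show "fst (IBf P) i j \<le> sBf s i j \<and> sBf s i j \<le> snd (IBf P) i j"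
        using cs_B Bf0 unfolding in_imat_def row_in_imat_def by (cases "yn i > 0") auto
    qed
    show "in_imat l n (IBn P) (sBn s)" unfolding in_imat_def
    proof (intro allI impI)
      fix i j assume "i < l" "j < n"
      then show "fst (IBn P) i j \<le> sBn s i j \<and> sBn s i j \<le> snd (IBn P) i j"
        using cs_B Bn0 unfolding in_imat_def row_in_imat_def by (cases "yn i > 0") auto
    qed
    show "in_ivec k (Ia P) (sa s)" unfolding in_ivec_def
    proof (intro allI impI)
      fix i assume "i < k"
      then show "fst (Ia P) i \<le> sa s i \<and> sa s i \<le> snd (Ia P) i"
        using cs_A a0 unfolding in_ivec_def entry_in_ivec_def by (cases "yf i = 0") auto
    qed
    show "in_ivec l (Ib P) (sb s)" unfolding in_ivec_def
    proof (intro allI impI)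
      fix i assume "i < l"
      then show "fst (Ib P) i \<le> sb s i \<and> sb s i \<le> snd (Ib P) i"
        using cs_B b0 unfolding in_ivec_def entry_in_ivec_def by (cases "yn i > 0") auto
    qed
    show "in_ivec m (Icf P) (scf s)" unfolding in_ivec_def using cs_f cf by auto
    show "in_ivec n (Icn P) (scn s)" unfolding in_ivec_def
    proof (intro allI impI)
      fix j assume j: "j < n"
      show "fst (Icn P) j \<le> scn s j \<and> scn s j \<le> snd (Icn P) j"
      proof (cases "xn j = 0")
        case True then show ?thesis using cs_n wf j unfolding ilp_wf_def ivec_wf_def by auto
      next
        case False then have "xn j > 0" using xn0 j by force
        then show ?thesis using cs_n cnp j False by auto
      qed
    qed
  qed
  show ?thesis using inD opt by blast
qed



definition cat :: "nat \<Rightarrow> rvec \<Rightarrow> rvec \<Rightarrow> rvec" where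
  "cat m u v = (\<lambda>j. if j < m then u j else v (j - m))"

lemma sum_add_split: fixes m n :: nat shows "(\<Sum>j<m+n. f j) = (\<Sum>j<m. f j) + (\<Sum>j<n. f (m + j)::real)"
  by (induction n) simp_all

lemma dp_cat: "dp (m+n) (cat m u v) d = (\<Sum>j<m. u j * d j) + (\<Sum>j<n. v j * d (m + j))"
  unfolding dp_def sum_add_split cat_def by simp

datatype cidx = EP nat | EM nat | IB nat | NN nat

lemma sum_I:
  "(\<Sum>i\<in>EP ` {..<k} \<union> EM ` {..<k} \<union> IB ` {..<l} \<union> NN ` {..<n}. f i) =
   (\<Sum>i<k. f (EP i)) + (\<Sum>i<k. f (EM i)) + (\<Sum>i<l. f (IB i)) + (\<Sum>i<n. (f (NN i) :: real))"
proof -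
  have "(\<Sum>i\<in>EP ` {..<k} \<union> EM ` {..<k} \<union> IB ` {..<l} \<union> NN ` {..<n}. f i) =
      (\<Sum>i\<in>EP ` {..<k}. f i) + (\<Sum>i\<in>EM ` {..<k}. f i) + (\<Sum>i\<in>IB ` {..<l}. f i) + (\<Sum>i\<in>NN ` {..<n}. f i)"
    by (subst sum.union_disjoint, force, force, force)+ simp
  also have "\<dots> = (\<Sum>i<k. f (EP i)) + (\<Sum>i<k. f (EM i)) + (\<Sum>i<l. f (IB i)) + (\<Sum>i<n. f (NN i))"
    by (simp add: sum.reindex inj_on_def)
  finally show ?thesis .
qed

lemma small_eps:
  fixes p q :: "'a \<Rightarrow> real"
  assumes "finite R" "\<forall>r\<in>R. 0 < p r"
  shows "\<exists>e>0. \<forall>e'. 0 < e' \<and> e' \<le> e \<longrightarrow> (\<forall>r\<in>R. 0 \<le> p r + e' * q r)"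
  using assms
proof (induction R rule: finite_induct)
  case empty then show ?case by (intro exI[of _ 1]) auto
next
  case (insert r R)
  then obtain e1 where e1: "e1 > 0" "\<forall>e'. 0 < e' \<and> e' \<le> e1 \<longrightarrow> (\<forall>r\<in>R. 0 \<le> p r + e' * q r)" by auto
  have pr: "0 < p r" using insert.prems by auto
  define e2 where "e2 = (if q r \<ge> 0 then 1 else p r / (- q r))"
  have e2: "e2 > 0" using pr unfolding e2_def by (auto simp: divide_pos_neg)
  have "0 \<le> p r + e' * q r" if "0 < e'" "e' \<le> e2" for e'
  proof (cases "q r \<ge> 0")
    case True then show ?thesis using pr that by (simp add: add_nonneg_nonneg less_imp_le)
  next
    case False
    then have "e' \<le> p r / (- q r)" using that unfolding e2_def by simp
    moreover have "0 < - q r" using False by simp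
    ultimately have "e' * (- q r) \<le> p r" using pos_le_divide_eq by blast
    then show ?thesis by (simp add: algebra_simps)
  qed
  then show ?case using e1 e2 by (intro exI[of _ "min e1 e2"]) auto
qed

lemma rowA_lin: "rowA m n s i (\<lambda>j. xf j + e * df j) (\<lambda>j. xn j + e * dn j) = rowA m n s i xf xn + e * rowA m n s i df dn"
  unfolding rowA_def by (simp add: algebra_simps sum.distrib sum_distrib_left)
lemma rowB_lin: "rowB m n s i (\<lambda>j. xf j + e * df j) (\<lambda>j. xn j + e * dn j) = rowB m n s i xf xn + e * rowB m n s i df dn"
  unfolding rowB_def by (simp add: algebra_simps sum.distrib sum_distrib_left)
lemma obj_lin: "lp_obj m n s (\<lambda>j. xf j + e * df j) (\<lambda>j. xn j + e * dn j) = lp_obj m n s xf xn + e * lp_obj m n s df dn"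
  unfolding lp_obj_def by (simp add: algebra_simps sum.distrib sum_distrib_left)

lemma direction:
  assumes opt: "lp_optimal k l m n s xf xn"
    and dA: "\<forall>i<k. rowA m n s i df dn = 0"
    and dB: "\<forall>i<l. rowB m n s i xf xn = sb s i \<longrightarrow> rowB m n s i df dn \<ge> 0"
    and dN: "\<forall>j<n. xn j = 0 \<longrightarrow> dn j \<ge> 0"
  shows "lp_obj m n s df dn \<ge> 0"
proof (rule ccontr)
  assume neg: "\<not> lp_obj m n s df dn \<ge> 0"
  have feas: "lp_feasible k l m n s xf xn" using opt unfolding lp_optimal_def by auto
  have fA: "\<forall>i<k. rowA m n s i xf xn = sa s i" and fB: "\<forall>i<l. rowB m n s i xf xn \<ge> sb s i"
    and fN: "\<forall>j<n. xn j \<ge> 0"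
    using feas unfolding lp_feasible_def rowA_def rowB_def by auto
  obtain e1 where e1: "e1 > 0" "\<forall>e'. 0 < e' \<and> e' \<le> e1 \<longrightarrow>
      (\<forall>i\<in>{i. i < l \<and> rowB m n s i xf xn \<noteq> sb s i}. 0 \<le> (rowB m n s i xf xn - sb s i) + e' * rowB m n s i df dn)"
    using small_eps[of "{i. i < l \<and> rowB m n s i xf xn \<noteq> sb s i}" "\<lambda>i. rowB m n s i xf xn - sb s i"] fB
    by fastforce
  obtain e2 where e2: "e2 > 0" "\<forall>e'. 0 < e' \<and> e' \<le> e2 \<longrightarrow>
      (\<forall>j\<in>{j. j < n \<and> xn j \<noteq> 0}. 0 \<le> xn j + e' * dn j)"
    using small_eps[of "{j. j < n \<and> xn j \<noteq> 0}" xn] fN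
    by fastforce
  define e where "e = min e1 e2"
  have e: "0 < e" "e \<le> e1" "e \<le> e2" using e1 e2 unfolding e_def by auto
  define zf where "zf = (\<lambda>j. xf j + e * df j)"
  define zn where "zn = (\<lambda>j. xn j + e * dn j)"
  have "lp_feasible k l m n s zf zn"
    unfolding lp_feasible_def
  proof (intro conjI allI impI)
    fix i assume i: "i < k"
    show "(\<Sum>j<m. sAf s i j * zf j) + (\<Sum>j<n. sAn s i j * zn j) = sa s i"
      using rowA_lin[of m n s i xf e df xn dn] fA dA i unfolding zf_def zn_def rowA_def by simp
  next
    fix i assume i: "i < l"
    have "rowB m n s i zf zn \<ge> sb s i"
    proof (cases "rowB m n s i xf xn = sb s i")
      case True then show ?thesis using dB i e unfolding zf_def zn_def rowB_lin
        by (simp add: less_imp_le)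
    next
      case False then show ?thesis using e1(2)[rule_format, of e i] e i unfolding zf_def zn_def rowB_lin
        by simp
    qed
    then show "(\<Sum>j<m. sBf s i j * zf j) + (\<Sum>j<n. sBn s i j * zn j) \<ge> sb s i" unfolding rowB_def .
  next
    fix j assume j: "j < n"
    show "0 \<le> zn j"
    proof (cases "xn j = 0")
      case True then show ?thesis using dN j e unfolding zn_def by simp
    next
      case False then show ?thesis using e2(2)[rule_format, of e j] e j unfolding zn_def by simp
    qed
  qed
  then have "lp_obj m n s xf xn \<le> lp_obj m n s zf zn" using opt unfolding lp_optimal_def by auto
  moreover have "lp_obj m n s zf zn < lp_obj m n s xf xn"
    unfolding zf_def zn_def obj_lin using neg e by (simp add: mult_pos_neg)
  ultimately show False by simp
qed



lemma delta_sum: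
  assumes "(t::nat) < n" shows "(\<Sum>j<n. (if j = t then 1 else 0) * f j) = (f t :: real)"
proof -
  have "(\<Sum>j<n. (if j = t then 1 else 0) * f j) = (\<Sum>j<n. if j = t then f j else 0)"
    by (intro sum.cong) auto
  also have "\<dots> = f t" using assms by (simp add: sum.delta)
  finally show ?thesis .
qed

lemma forward:
  assumes inD: "in_Dp k l m n P s" and opt: "lp_optimal k l m n s xf xn"
  shows "\<exists>\<sigma>. sign_vector k \<sigma> \<and>
               (\<exists>Af' An' a' Bf' Bn' b' yf yn.
                  testing_system k l m n P xf xn \<sigma> Af' An' a' Bf' Bn' b' yf yn)"
proof -
  define act where "act i = (rowB m n s i xf xn = sb s i)" for i
  define G :: "cidx \<Rightarrow> rvec" where "G = (\<lambda>c. case c of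
      EP i \<Rightarrow> cat m (sAf s i) (sAn s i)
    | EM i \<Rightarrow> cat m (\<lambda>j. - sAf s i j) (\<lambda>j. - sAn s i j)
    | IB i \<Rightarrow> (if act i then cat m (sBf s i) (sBn s i) else (\<lambda>_. 0))
    | NN t \<Rightarrow> (if xn t = 0 then cat m (\<lambda>_. 0) (\<lambda>j. if j = t then 1 else 0) else (\<lambda>_. 0)))"
  define I where "I = EP ` {..<k} \<union> EM ` {..<k} \<union> IB ` {..<l} \<union> NN ` {..<n}"
  define c where "c = cat m (scf s) (scn s)"
  have finI: "finite I" unfolding I_def by simp
  have hyp: "0 \<le> dp (m+n) c d" if d: "\<forall>i\<in>I. 0 \<le> dp (m+n) (G i) d" for d
  proof -
    define dn where "dn = (\<lambda>j. d (m + j))"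
    have dA: "\<forall>i<k. rowA m n s i d dn = 0"
    proof (intro allI impI)
      fix i assume i: "i < k"
      have "0 \<le> dp (m+n) (G (EP i)) d" "0 \<le> dp (m+n) (G (EM i)) d" using d i unfolding I_def by auto
      then show "rowA m n s i d dn = 0"
        unfolding rowA_def dn_def by (simp add: G_def dp_cat sum_negf)
    qed
    have dB: "\<forall>i<l. rowB m n s i xf xn = sb s i \<longrightarrow> rowB m n s i d dn \<ge> 0"
    proof (intro allI impI)
      fix i assume i: "i < l" and a: "rowB m n s i xf xn = sb s i"
      have "0 \<le> dp (m+n) (G (IB i)) d" using d i unfolding I_def by auto
      moreover have "act i" using a unfolding act_def .
      ultimately show "rowB m n s i d dn \<ge> 0"
        unfolding rowB_def dn_def by (simp add: G_def dp_cat)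
    qed
    have dN: "\<forall>j<n. xn j = 0 \<longrightarrow> dn j \<ge> 0"
    proof (intro allI impI)
      fix t assume t: "t < n" and a: "xn t = 0"
      have "0 \<le> dp (m+n) (G (NN t)) d" using d t unfolding I_def by auto
      then show "dn t \<ge> 0"
        using a t unfolding dn_def by (simp add: G_def dp_cat delta_sum)
    qed
    have "0 \<le> lp_obj m n s d dn" using direction[OF opt dA dB dN] .
    then show ?thesis unfolding c_def dp_cat lp_obj_def dn_def .
  qed
  have "\<exists>w. (\<forall>i\<in>I. 0 \<le> w i) \<and> (\<forall>j<m+n. c j = (\<Sum>i\<in>I. w i * G i j))"
  proof (rule ccontr)
    assume "\<not> ?thesis"
    from farkas_aux[OF finI this] obtain d where "\<forall>i\<in>I. 0 \<le> dp (m+n) (G i) d" "dp (m+n) c d < 0"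
      by blast
    with hyp show False by force
  qed
  then obtain w where w: "\<forall>i\<in>I. 0 \<le> w i" "\<forall>j<m+n. c j = (\<Sum>i\<in>I. w i * G i j)"
    by blast
  define yf where "yf i = w (EP i) - w (EM i)" for i
  define yn where "yn i = (if act i then w (IB i) else 0)" for i
  have wI: "\<forall>i<l. 0 \<le> w (IB i)" "\<forall>j<n. 0 \<le> w (NN j)" using w(1) unfolding I_def by auto
  have yn0: "\<forall>i<l. 0 \<le> yn i" using wI unfolding yn_def by auto
  have hf: "scf s j = (\<Sum>i<k. yf i * sAf s i j) + (\<Sum>i<l. yn i * sBf s i j)" if j: "j < m" for j
  proof -
    have "c j = (\<Sum>i\<in>I. w i * G i j)" using w(2) j by auto
    also have "\<dots> = (\<Sum>i<k. w (EP i) * sAf s i j) + (\<Sum>i<k. w (EM i) * (- sAf s i j))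
        + (\<Sum>i<l. yn i * sBf s i j) + 0"
      unfolding I_def sum_I using j
      by (intro arg_cong2[where f="(+)"] sum.cong sum.neutral) (auto simp: G_def cat_def yn_def)
    finally show ?thesis using j unfolding c_def cat_def yf_def
      by (simp add: left_diff_distrib sum_subtractf sum_negf)
  qed
  have hn: "scn s j = (\<Sum>i<k. yf i * sAn s i j) + (\<Sum>i<l. yn i * sBn s i j)
      + (if xn j = 0 then w (NN j) else 0)" if j: "j < n" for j
  proof -
    have "c (m + j) = (\<Sum>i\<in>I. w i * G i (m + j))" using w(2) j by auto
    also have "\<dots> = (\<Sum>i<k. w (EP i) * sAn s i j) + (\<Sum>i<k. w (EM i) * (- sAn s i j))
        + (\<Sum>i<l. yn i * sBn s i j) + (\<Sum>t<n. (if t = j then 1 else 0) * (if xn t = 0 then w (NN t) else 0))"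
      unfolding I_def sum_I using j
      by (intro arg_cong2[where f="(+)"] sum.cong) (auto simp: G_def cat_def yn_def)
    also have "(\<Sum>t<n. (if t = j then 1 else 0) * (if xn t = 0 then w (NN t) else 0)) = (if xn j = 0 then w (NN j) else 0)"
      using delta_sum[OF j] .
    finally show ?thesis using j unfolding c_def cat_def yf_def
      by (simp add: left_diff_distrib sum_subtractf sum_negf)
  qed
  define \<sigma> where "\<sigma> i = (if yf i \<ge> 0 then 1 else (-1::real))" for i
  define Af' where "Af' i j = yf i * sAf s i j" for i j
  define An' where "An' i j = yf i * sAn s i j" for i j
  define a' where "a' i = yf i * sa s i" for i
  define Bf' where "Bf' i j = yn i * sBf s i j" for i j
  define Bn' where "Bn' i j = yn i * sBn s i j" for i j
  define b' where "b' i = yn i * sb s i" for i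
  have feas: "lp_feasible k l m n s xf xn" using opt unfolding lp_optimal_def by auto
  have ts: "testing_system k l m n P xf xn \<sigma> Af' An' a' Bf' Bn' b' yf yn"
    unfolding testing_system_def
  proof (intro conjI)
    show "in_diag_imat k m yf (IAf P) Af'" unfolding in_diag_imat_def Af'_def
      using inD unfolding in_Dp_def by blast
    show "in_diag_imat k n yf (IAn P) An'" unfolding in_diag_imat_def An'_def
      using inD unfolding in_Dp_def by blast
    show "in_diag_ivec k yf (Ia P) a'" unfolding in_diag_ivec_def a'_def
      using inD unfolding in_Dp_def by blast
    show "in_diag_imat l m yn (IBf P) Bf'" unfolding in_diag_imat_def Bf'_def
      using inD unfolding in_Dp_def by blast
    show "in_diag_imat l n yn (IBn P) Bn'" unfolding in_diag_imat_def Bn'_def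
      using inD unfolding in_Dp_def by blast
    show "in_diag_ivec l yn (Ib P) b'" unfolding in_diag_ivec_def b'_def
      using inD unfolding in_Dp_def by blast
    show "\<forall>i<k. (\<Sum>j<m. Af' i j * xf j) + (\<Sum>j<n. An' i j * xn j) = a' i"
    proof (intro allI impI)
      fix i assume i: "i < k"
      have "(\<Sum>j<m. Af' i j * xf j) + (\<Sum>j<n. An' i j * xn j) = yf i * rowA m n s i xf xn"
        unfolding Af'_def An'_def rowA_def by (simp add: distrib_left sum_distrib_left mult.assoc)
      also have "\<dots> = a' i" using feas i unfolding lp_feasible_def rowA_def a'_def by simp
      finally show "(\<Sum>j<m. Af' i j * xf j) + (\<Sum>j<n. An' i j * xn j) = a' i" .
    qed
    show "\<forall>i<l. (\<Sum>j<m. Bf' i j * xf j) + (\<Sum>j<n. Bn' i j * xn j) = b' i"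
    proof (intro allI impI)
      fix i assume i: "i < l"
      have "(\<Sum>j<m. Bf' i j * xf j) + (\<Sum>j<n. Bn' i j * xn j) = yn i * rowB m n s i xf xn"
        unfolding Bf'_def Bn'_def rowB_def by (simp add: distrib_left sum_distrib_left mult.assoc)
      also have "\<dots> = b' i" unfolding b'_def yn_def act_def by simp
      finally show "(\<Sum>j<m. Bf' i j * xf j) + (\<Sum>j<n. Bn' i j * xn j) = b' i" .
    qed
    have csf: "colsum k Af' j + colsum l Bf' j = scf s j" if "j < m" for j
      using hf[OF that] unfolding colsum_def Af'_def Bf'_def by simp
    have csn: "colsum k An' j + colsum l Bn' j = scn s j - (if xn j = 0 then w (NN j) else 0)" if "j < n" for j
      using hn[OF that] unfolding colsum_def An'_def Bn'_def by simp
    show "\<forall>j<m. fst (Icf P) j \<le> colsum k Af' j + colsum l Bf' j \<and>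
            colsum k Af' j + colsum l Bf' j \<le> snd (Icf P) j"
      using csf inD unfolding in_Dp_def in_ivec_def by auto
    show "\<forall>j<n. xn j > 0 \<longrightarrow> fst (Icn P) j \<le> colsum k An' j + colsum l Bn' j \<and>
            colsum k An' j + colsum l Bn' j \<le> snd (Icn P) j"
      using csn inD unfolding in_Dp_def in_ivec_def by auto
    show "\<forall>j<n. xn j = 0 \<longrightarrow> colsum k An' j + colsum l Bn' j \<le> snd (Icn P) j"
    proof (intro allI impI)
      fix j assume j: "j < n" and x: "xn j = 0"
      have "scn s j \<le> snd (Icn P) j" using inD j unfolding in_Dp_def in_ivec_def by auto
      then show "colsum k An' j + colsum l Bn' j \<le> snd (Icn P) j" using csn[OF j] wI j by auto
    qed
    show "\<forall>i<l. yn i \<ge> 0" using yn0 .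
    show "\<forall>i<k. \<sigma> i * yf i \<ge> 0" unfolding \<sigma>_def by auto
  qed
  have "sign_vector k \<sigma>" unfolding sign_vector_def \<sigma>_def by auto
  with ts show ?thesis by blast
qed

theorem mainTheorem4:
  fixes k l m n :: nat and P :: ilp and xf xn :: rvec
  assumes "ilp_wf k l m n P"
  shows "(weakly_optimal k l m n P xf xn \<longleftrightarrow>
            weakly_feasible k l m n P xf xn \<and>
            (\<exists>\<sigma>. sign_vector k \<sigma> \<and>
               (\<exists>Af' An' a' Bf' Bn' b' yf yn.
                  testing_system k l m n P xf xn \<sigma> Af' An' a' Bf' Bn' b' yf yn))) \<and>
         (\<forall>\<sigma> Af' An' a' Bf' Bn' b' yf yn s.
            weakly_feasible k l m n P xf xn \<and> sign_vector k \<sigma> \<and>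
            testing_system k l m n P xf xn \<sigma> Af' An' a' Bf' Bn' b' yf yn \<and>
            constructed_scenario k l m n P xf xn Af' An' a' Bf' Bn' b' yf yn s \<longrightarrow>
            in_Dp k l m n P s \<and> lp_optimal k l m n s xf xn)"
proof -
  have second: "\<forall>\<sigma> Af' An' a' Bf' Bn' b' yf yn s.
            weakly_feasible k l m n P xf xn \<and> sign_vector k \<sigma> \<and>
            testing_system k l m n P xf xn \<sigma> Af' An' a' Bf' Bn' b' yf yn \<and>
            constructed_scenario k l m n P xf xn Af' An' a' Bf' Bn' b' yf yn s \<longrightarrow>
            in_Dp k l m n P s \<and> lp_optimal k l m n s xf xn"
    using backward[OF assms] by blast
  have fw: "weakly_feasible k l m n P xf xn \<and>
            (\<exists>\<sigma>. sign_vector k \<sigma> \<and>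
               (\<exists>Af' An' a' Bf' Bn' b' yf yn.
                  testing_system k l m n P xf xn \<sigma> Af' An' a' Bf' Bn' b' yf yn))"
    if wo: "weakly_optimal k l m n P xf xn"
  proof -
    from wo obtain s where s: "in_Dp k l m n P s" "lp_optimal k l m n s xf xn"
      unfolding weakly_optimal_def by blast
    have "weakly_feasible k l m n P xf xn"
      using s unfolding weakly_feasible_def lp_optimal_def by blast
    with forward[OF s] show ?thesis by blast
  qed
  have bw: "weakly_optimal k l m n P xf xn"
    if wf: "weakly_feasible k l m n P xf xn" and sv: "sign_vector k \<sigma>"
      and ts: "testing_system k l m n P xf xn \<sigma> Af' An' a' Bf' Bn' b' yf yn"
    for \<sigma> Af' An' a' Bf' Bn' b' yf yn
  proof -
    from wf obtain s0 where s0: "in_Dp k l m n P s0" "lp_feasible k l m n s0 xf xn"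
      unfolding weakly_feasible_def by blast
    define s where "s = \<lparr>sAf = (\<lambda>i j. if yf i \<noteq> 0 then Af' i j / yf i else sAf s0 i j),
      sAn = (\<lambda>i j. if yf i \<noteq> 0 then An' i j / yf i else sAn s0 i j),
      sBf = (\<lambda>i j. if yn i > 0 then Bf' i j / yn i else sBf s0 i j),
      sBn = (\<lambda>i j. if yn i > 0 then Bn' i j / yn i else sBn s0 i j),
      sa = (\<lambda>i. if yf i \<noteq> 0 then a' i / yf i else sa s0 i),
      sb = (\<lambda>i. if yn i > 0 then b' i / yn i else sb s0 i),
      scf = (\<lambda>j. colsum k Af' j + colsum l Bf' j),
      scn = (\<lambda>j. if xn j = 0 then snd (Icn P) j else colsum k An' j + colsum l Bn' j)\<rparr>"
    have "constructed_scenario k l m n P xf xn Af' An' a' Bf' Bn' b' yf yn s"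
      unfolding constructed_scenario_def
    proof (intro conjI allI impI)
      fix i assume i: "i < k"
      show "if yf i \<noteq> 0 then
              (\<forall>j<m. sAf s i j = Af' i j / yf i) \<and> (\<forall>j<n. sAn s i j = An' i j / yf i) \<and>
              sa s i = a' i / yf i
            else
              (\<Sum>j<m. sAf s i j * xf j) + (\<Sum>j<n. sAn s i j * xn j) = sa s i \<and>
              row_in_imat m (IAf P) i (sAf s) \<and> row_in_imat n (IAn P) i (sAn s) \<and>
              entry_in_ivec (Ia P) i (sa s)"
        using s0 i unfolding s_def in_Dp_def in_imat_def in_ivec_def row_in_imat_def
          entry_in_ivec_def lp_feasible_def by simp
    next
      fix i assume i: "i < l"
      show "if yn i > 0 then
              (\<forall>j<m. sBf s i j = Bf' i j / yn i) \<and> (\<forall>j<n. sBn s i j = Bn' i j / yn i) \<and>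
              sb s i = b' i / yn i
            else
              (\<Sum>j<m. sBf s i j * xf j) + (\<Sum>j<n. sBn s i j * xn j) \<ge> sb s i \<and>
              row_in_imat m (IBf P) i (sBf s) \<and> row_in_imat n (IBn P) i (sBn s) \<and>
              entry_in_ivec (Ib P) i (sb s)"
        using s0 i unfolding s_def in_Dp_def in_imat_def in_ivec_def row_in_imat_def
          entry_in_ivec_def lp_feasible_def by simp
    qed (simp_all add: s_def)
    with second wf sv ts have "in_Dp k l m n P s \<and> lp_optimal k l m n s xf xn" by blast
    then show ?thesis unfolding weakly_optimal_def by blast
  qed
  show ?thesis using fw bw second by blast
qed

end
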